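(* Let $M$ be a right $\ddot{\mathbb H}_\ell$-module. The linear map $\Psi_s: M\otimes_{\mathbb H_\ell}\mathcal V_s^{\otimes\ell}\to M\otimes_{\mathbb H_\ell}\mathcal V_{\tau s}^{\otimes\ell}$ given by $$\Psi_s(w\otimes v_{j_1}\otimes\cdots\otimes v_{j_\ell})=wX_1^{-\delta_{j_1,\kappa}}X_2^{-\delta_{j_2,\kappa}}\cdots X_\ell^{-\delta_{j_\ell,\kappa}}\otimes v_{j_1+1}\otimes\cdots\otimes v_{j_\ell+1}$$ for all $w\in M$ and all $j_1,\dots,j_\ell\in\{1,\dots,\kappa\}$ (with the convention $v_{\kappa+1}=v_1$) is well defined.
   Context: Fix integers $m,n\geqslant0$, $m\neq n$, $\kappa=m+n$; $q\in\mathbb C^\times$ not a root of unity, $\zeta\in\mathbb C^\times$, $\ell\geqslant1$. A parity sequence $s=(s_1,\dots,s_\kappa)\in\{\pm1\}^\kappa$ has exactly $m$ entries $1$; $\tau s=(s_\kappa,s_1,\dots,s_{\kappa-1})$. For a parity sequence $t$, $\mathcal V_t$ is the superspace with basis $v_1,\dots,v_\kappa$ and $|v_j|=(1-t_j)/2$; tensor products are super tensor products. The Hecke algebra $\mathbb H_\ell$ (generated by $T_i^{\pm1}$, $1\leqslant i<\ell$, with $(T_i+1)(T_i-q^2)=0$ and braid relations) acts on $\mathcal V_t^{\otimes\ell}$ by letting $T_i$ act on factors $i,i+1$ via $\mathcal T(v_a\otimes v_a)=t_aq^{1+t_a}v_a\otimes v_a$, $\mathcal T(v_a\otimes v_b)=(-1)^{|v_a||v_b|}qv_b\otimes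 v_a$ ($a<b$), $\mathcal T(v_a\otimes v_b)=(-1)^{|v_a||v_b|}qv_b\otimes v_a+(q^2-1)v_a\otimes v_b$ ($a>b$). $\ddot{\mathbb H}_\ell$ is the double affine Hecke algebra generated by $T_i^{\pm1}$ ($1\leqslant i<\ell$), $X_j^{\pm1},Y_j^{\pm1}$ ($1\leqslant j\leqslant\ell$) with relations: $T_iT_i^{-1}=T_i^{-1}T_i=1$, $(T_i+1)(T_i-q^2)=0$, $T_iT_{i+1}T_i=T_{i+1}T_iT_{i+1}$, $T_iT_j=T_jT_i$ ($|i-j|>1$); the $X_j^{\pm1}$ commute and are mutually inverse, likewise the $Y_j^{\pm1}$; $X_0Y_1=\zeta Y_1X_0$ with $X_0=X_1\cdots X_\ell$; $T_iX_iT_i=q^2X_{i+1}$, $T_i^{-1}Y_iT_i^{-1}=q^{-2}Y_{i+1}$, $X_2Y_1^{-1}X_2^{-1}Y_1=q^{-2}T_1^2$; $X_jT_i=T_iX_j$ and $Y_jT_i=T_iY_j$ for $j\neq i,i+1$. The tensor products are over $\mathbb H_\ell\subset\ddot{\mathbb H}_\ell$. *)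

theory Defs
  imports Complex_Main "HOL-Library.Function_Algebras"
begin

text \<open>Index tuples (j_1,...,j_l) with entries in {1..kappa}, as lists (position p = index p+1).\<close>
definition idx :: "nat \<Rightarrow> nat \<Rightarrow> nat list set" where
  "idx \<kappa> l = {J. length J = l \<and> set J \<subseteq> {1..\<kappa>}}"

definition parity_seq :: "nat \<Rightarrow> nat \<Rightarrow> (nat \<Rightarrow> int) \<Rightarrow> bool" where
  "parity_seq \<kappa> m s \<longleftrightarrow> (\<forall>j\<in>{1..\<kappa>}. s j = 1 \<or> s j = -1) \<and> card {j\<in>{1..\<kappa>}. s j = 1} = m"

definition tau :: "nat \<Rightarrow> (nat \<Rightarrow> int) \<Rightarrow> nat \<Rightarrow> int" where
  "tau \<kappa> s = (\<lambda>j. if j = 1 then s \<kappa> else s (j - 1))"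

definition par :: "(nat \<Rightarrow> int) \<Rightarrow> nat \<Rightarrow> int" where
  "par t a = (1 - t a) div 2"

text \<open>Right action of a word: act_seq [a1,...,ak] w = w a1 a2 ... ak.\<close>
definition act_seq :: "('m \<Rightarrow> 'm) list \<Rightarrow> 'm \<Rightarrow> 'm" where
  "act_seq fs w = fold (\<lambda>f u. f u) fs w"

text \<open>Elements of M (x)_C V^{(x)l}: functions from index tuples to M (supported on idx);
  sing J w is the elementary tensor w (x) v_{j_1} (x) ... (x) v_{j_l}.\<close>
definition sing :: "nat list \<Rightarrow> 'm::zero \<Rightarrow> nat list \<Rightarrow> 'm" where
  "sing J w = (\<lambda>K. if K = J then w else 0)"

definition fscale :: "(complex \<Rightarrow> 'm \<Rightarrow> 'm) \<Rightarrow> complex \<Rightarrow> (nat list \<Rightarrow> 'm) \<Rightarrow> nat list \<Rightarrow> 'm" where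
  "fscale scale c F = (\<lambda>K. scale c (F K))"

definition swap_at :: "nat list \<Rightarrow> nat \<Rightarrow> nat list" where
  "swap_at J i = J[i - 1 := J ! i, i := J ! (i - 1)]"

text \<open>Coefficient of v_K in T_i (v_J) for the Hecke action on V_t^{(x)l} (T_i acting on factors i,i+1).\<close>
definition hc :: "complex \<Rightarrow> (nat \<Rightarrow> int) \<Rightarrow> nat \<Rightarrow> nat list \<Rightarrow> nat list \<Rightarrow> complex" where
  "hc q t i K J =
    (let a = J ! (i - 1); b = J ! i;
         sg = (-1::complex) ^ nat (par t a * par t b) in
     if a = b then (if K = J then of_int (t a) * q powi (1 + t a) else 0)
     else if a < b then (if K = swap_at J i then sg * q else 0)
     else (if K = swap_at J i then sg * q else 0) + (if K = J then q^2 - 1 else 0))"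

definition Tact :: "(complex \<Rightarrow> 'm::ab_group_add \<Rightarrow> 'm) \<Rightarrow> nat \<Rightarrow> nat \<Rightarrow> complex \<Rightarrow> (nat \<Rightarrow> int)
    \<Rightarrow> nat \<Rightarrow> (nat list \<Rightarrow> 'm) \<Rightarrow> nat list \<Rightarrow> 'm" where
  "Tact scale \<kappa> l q t i F = (\<lambda>K. \<Sum>J\<in>idx \<kappa> l. scale (hc q t i K J) (F J))"

text \<open>Generators of the kernel of M (x)_C V_t^{(x)l} -> M (x)_{H_l} V_t^{(x)l}:
  (w T_i) (x) v_J - w (x) T_i v_J.\<close>
definition rels :: "(complex \<Rightarrow> 'm::ab_group_add \<Rightarrow> 'm) \<Rightarrow> nat \<Rightarrow> nat \<Rightarrow> complex \<Rightarrow> (nat \<Rightarrow> int)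
    \<Rightarrow> (nat \<Rightarrow> 'm \<Rightarrow> 'm) \<Rightarrow> (nat list \<Rightarrow> 'm) set" where
  "rels scale \<kappa> l q t T =
     {sing J (T i w) - Tact scale \<kappa> l q t i (sing J w) | J w i. J \<in> idx \<kappa> l \<and> 1 \<le> i \<and> i < l}"

definition tensor_kernel :: "(complex \<Rightarrow> 'm::ab_group_add \<Rightarrow> 'm) \<Rightarrow> nat \<Rightarrow> nat \<Rightarrow> complex \<Rightarrow> (nat \<Rightarrow> int)
    \<Rightarrow> (nat \<Rightarrow> 'm \<Rightarrow> 'm) \<Rightarrow> (nat list \<Rightarrow> 'm) set" where
  "tensor_kernel scale \<kappa> l q t T = module.span (fscale scale) (rels scale \<kappa> l q t T)"

definition Xneg :: "nat \<Rightarrow> nat \<Rightarrow> (nat \<Rightarrow> 'm \<Rightarrow> 'm) \<Rightarrow> nat list \<Rightarrow> 'm \<Rightarrow> 'm" where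
  "Xneg \<kappa> l Xinv J w = act_seq (map (\<lambda>i. if J ! (i - 1) = \<kappa> then Xinv i else id) [1..<l+1]) w"

definition shift :: "nat \<Rightarrow> nat list \<Rightarrow> nat list" where
  "shift \<kappa> J = map (\<lambda>j. if j = \<kappa> then 1 else j + 1) J"

definition Psi :: "nat \<Rightarrow> nat \<Rightarrow> (nat \<Rightarrow> 'm::ab_group_add \<Rightarrow> 'm) \<Rightarrow> (nat list \<Rightarrow> 'm) \<Rightarrow> nat list \<Rightarrow> 'm" where
  "Psi \<kappa> l Xinv F = (\<Sum>J\<in>idx \<kappa> l. sing (shift \<kappa> J) (Xneg \<kappa> l Xinv J (F J)))"

text \<open>A right module over the double affine Hecke algebra: complex vector space with linear
  operators giving the right action of generators (w . a = a w); w.(ab) = (w.a).b.\<close>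
definition daha_right_module ::
  "(complex \<Rightarrow> 'm::ab_group_add \<Rightarrow> 'm) \<Rightarrow> complex \<Rightarrow> complex \<Rightarrow> nat \<Rightarrow>
   (nat \<Rightarrow> 'm \<Rightarrow> 'm) \<Rightarrow> (nat \<Rightarrow> 'm \<Rightarrow> 'm) \<Rightarrow> (nat \<Rightarrow> 'm \<Rightarrow> 'm) \<Rightarrow> (nat \<Rightarrow> 'm \<Rightarrow> 'm) \<Rightarrow>
   (nat \<Rightarrow> 'm \<Rightarrow> 'm) \<Rightarrow> (nat \<Rightarrow> 'm \<Rightarrow> 'm) \<Rightarrow> bool" where
  "daha_right_module scale q \<zeta> l T Tinv X Xinv Y Yinv \<longleftrightarrow>
    vector_space scale \<and>
    (\<forall>i. 1 \<le> i \<and> i < l \<longrightarrow> Vector_Spaces.linear scale scale (T i) \<and> Vector_Spaces.linear scale scale (Tinv i)) \<and>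
    (\<forall>j. 1 \<le> j \<and> j \<le> l \<longrightarrow> Vector_Spaces.linear scale scale (X j) \<and> Vector_Spaces.linear scale scale (Xinv j)
        \<and> Vector_Spaces.linear scale scale (Y j) \<and> Vector_Spaces.linear scale scale (Yinv j)) \<and>
    \<comment> \<open>T_i T_i^{-1} = T_i^{-1} T_i = 1, (T_i + 1)(T_i - q^2) = 0\<close>
    (\<forall>i w. 1 \<le> i \<and> i < l \<longrightarrow> Tinv i (T i w) = w \<and> T i (Tinv i w) = w \<and>
        T i (T i w + w) - scale (q^2) (T i w + w) = 0) \<and>
    \<comment> \<open>braid relations\<close>
    (\<forall>i w. 1 \<le> i \<and> i + 1 < l \<longrightarrow> act_seq [T i, T (i+1), T i] w = act_seq [T (i+1), T i, T (i+1)] w) \<and>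
    (\<forall>i j w. 1 \<le> i \<and> i < l \<and> 1 \<le> j \<and> j < l \<and> (i + 1 < j \<or> j + 1 < i) \<longrightarrow> T i (T j w) = T j (T i w)) \<and>
    \<comment> \<open>X's and Y's: commuting, mutually inverse\<close>
    (\<forall>j w. 1 \<le> j \<and> j \<le> l \<longrightarrow> Xinv j (X j w) = w \<and> X j (Xinv j w) = w \<and>
        Yinv j (Y j w) = w \<and> Y j (Yinv j w) = w) \<and>
    (\<forall>j k w. 1 \<le> j \<and> j \<le> l \<and> 1 \<le> k \<and> k \<le> l \<longrightarrow>
        X j (X k w) = X k (X j w) \<and> X j (Xinv k w) = Xinv k (X j w) \<and> Xinv j (Xinv k w) = Xinv k (Xinv j w) \<and>
        Y j (Y k w) = Y k (Y j w) \<and> Y j (Yinv k w) = Yinv k (Y j w) \<and> Yinv j (Yinv k w) = Yinv k (Yinv j w)) \<and>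
    \<comment> \<open>X_0 Y_1 = zeta Y_1 X_0, X_0 = X_1 ... X_l\<close>
    (\<forall>w. act_seq (map X [1..<l+1] @ [Y 1]) w = scale \<zeta> (act_seq (Y 1 # map X [1..<l+1]) w)) \<and>
    \<comment> \<open>T_i X_i T_i = q^2 X_{i+1}, T_i^{-1} Y_i T_i^{-1} = q^{-2} Y_{i+1}\<close>
    (\<forall>i w. 1 \<le> i \<and> i < l \<longrightarrow> act_seq [T i, X i, T i] w = scale (q^2) (X (i+1) w) \<and>
        act_seq [Tinv i, Y i, Tinv i] w = scale (inverse (q^2)) (Y (i+1) w)) \<and>
    \<comment> \<open>X_2 Y_1^{-1} X_2^{-1} Y_1 = q^{-2} T_1^2\<close>
    (2 \<le> l \<longrightarrow> (\<forall>w. act_seq [X 2, Yinv 1, Xinv 2, Y 1] w = scale (inverse (q^2)) (T 1 (T 1 w)))) \<and>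
    \<comment> \<open>X_j T_i = T_i X_j, Y_j T_i = T_i Y_j for j not in {i, i+1}\<close>
    (\<forall>i j w. 1 \<le> i \<and> i < l \<and> 1 \<le> j \<and> j \<le> l \<and> j \<noteq> i \<and> j \<noteq> i + 1 \<longrightarrow>
        T i (X j w) = X j (T i w) \<and> T i (Y j w) = Y j (T i w))"

end

theory Submission
  imports Defs
begin

lemma act_seq_Nil[simp]: "act_seq [] x = x" by (simp add: act_seq_def)
lemma act_seq_Cons[simp]: "act_seq (f # fs) x = act_seq fs (f x)" by (simp add: act_seq_def)
lemma act_seq_append[simp]: "act_seq (fs @ gs) x = act_seq gs (act_seq fs x)" by (simp add: act_seq_def)

lemma act_seq_comm:
  assumes "\<forall>f\<in>set fs. \<forall>x. f (h x) = h (f x)"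
  shows "act_seq fs (h x) = h (act_seq fs x)"
  using assms by (induction fs arbitrary: x) auto

lemma act_seq_add:
  assumes "\<forall>f\<in>set fs. \<forall>x y. f (x + y) = f x + f y"
  shows "act_seq fs (x + y) = act_seq fs x + act_seq fs (y::'a::plus)"
  using assms by (induction fs arbitrary: x y) auto

lemma act_seq_move:
  assumes "\<forall>g\<in>set fs. \<forall>x. f (g x) = g (f x)"
  shows "act_seq (fs @ f # gs) x = act_seq (fs @ gs) (f x)"
  using act_seq_comm[of fs f x] assms by simp

lemma finite_idx: "finite (idx \<kappa> l)"
proof -
  have "idx \<kappa> l \<subseteq> {xs. set xs \<subseteq> {1..\<kappa>} \<and> length xs = l}" by (auto simp: idx_def)
  thus ?thesis using finite_lists_length_eq[of "{1..\<kappa>}" l] finite_subset by auto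
qed

lemma swap_len[simp]: "length (swap_at J i) = length J" by (simp add: swap_at_def)

lemma swap_nth1: "1 \<le> i \<Longrightarrow> i < length J \<Longrightarrow> swap_at J i ! (i-1) = J ! i"
  by (simp add: swap_at_def nth_list_update)
lemma swap_nth2: "1 \<le> i \<Longrightarrow> i < length J \<Longrightarrow> swap_at J i ! i = J ! (i-1)"
  by (simp add: swap_at_def nth_list_update)
lemma swap_nth3: "k \<noteq> i-1 \<Longrightarrow> k \<noteq> i \<Longrightarrow> swap_at J i ! k = J ! k"
  by (simp add: swap_at_def nth_list_update)

lemma swap_idx: "J \<in> idx \<kappa> l \<Longrightarrow> 1 \<le> i \<Longrightarrow> i < l \<Longrightarrow> swap_at J i \<in> idx \<kappa> l"
  unfolding idx_def swap_at_def
  by (auto dest!: set_update_subset_insert[THEN subsetD] simp: nth_mem subset_iff)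

lemma swap_neq: "1 \<le> i \<Longrightarrow> i < length J \<Longrightarrow> J ! (i-1) \<noteq> J ! i \<Longrightarrow> swap_at J i \<noteq> J"
  using swap_nth1 by metis

lemma swap_swap: assumes "1 \<le> i" "i < length K" shows "swap_at (swap_at K i) i = K"
proof (rule nth_equalityI)
  show "length (swap_at (swap_at K i) i) = length K" by simp
  fix k assume "k < length (swap_at (swap_at K i) i)"
  show "swap_at (swap_at K i) i ! k = K ! k"
    using assms swap_nth1[of i] swap_nth2[of i] swap_nth3[of k i]
    by (cases "k = i - 1"; cases "k = i") (auto simp: swap_nth1 swap_nth2)
qed

lemma shift_nth: "k < length J \<Longrightarrow> shift \<kappa> J ! k = (if J ! k = \<kappa> then 1 else J ! k + 1)"
  by (simp add: shift_def)

lemma shift_swap: "1 \<le> i \<Longrightarrow> i < length J \<Longrightarrow> shift \<kappa> (swap_at J i) = swap_at (shift \<kappa> J) i"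
  by (simp add: shift_def swap_at_def map_update)

lemma shift_idx: "J \<in> idx \<kappa> l \<Longrightarrow> shift \<kappa> J \<in> idx \<kappa> l"
  unfolding idx_def shift_def by auto

lemma tau_sh: "j \<in> {1..\<kappa>} \<Longrightarrow> tau \<kappa> s (if j = \<kappa> then 1 else j + 1) = s j"
  by (auto simp: tau_def)

locale L =
  fixes scale :: "complex \<Rightarrow> 'm::ab_group_add \<Rightarrow> 'm"
    and \<kappa> l :: nat and q \<zeta> :: complex and s :: "nat \<Rightarrow> int"
    and T Tinv X Xinv Y Yinv :: "nat \<Rightarrow> 'm \<Rightarrow> 'm"
  assumes D: "daha_right_module scale q \<zeta> l T Tinv X Xinv Y Yinv"
    and q0: "q \<noteq> 0"
begin

sublocale V: vector_space scale using D by (simp add: daha_right_module_def)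

lemma lin_facts1: "1 \<le> i \<Longrightarrow> i < l \<Longrightarrow> Vector_Spaces.linear scale scale (T i) \<and> Vector_Spaces.linear scale scale (Tinv i)"
  using D unfolding daha_right_module_def by simp
lemma lin_facts2: "1 \<le> j \<Longrightarrow> j \<le> l \<Longrightarrow> Vector_Spaces.linear scale scale (X j) \<and> Vector_Spaces.linear scale scale (Xinv j)"
  using D unfolding daha_right_module_def by simp
lemmas lin_facts = lin_facts1 lin_facts2

lemma T_lin: "1 \<le> i \<Longrightarrow> i < l \<Longrightarrow> T i (x + y) = T i x + T i y \<and> T i (scale c x) = scale c (T i x)"
  using lin_facts(1)[of i] unfolding Vector_Spaces.linear_iff by blast
lemma Tinv_lin: "1 \<le> i \<Longrightarrow> i < l \<Longrightarrow> Tinv i (x + y) = Tinv i x + Tinv i y \<and> Tinv i (scale c x) = scale c (Tinv i x)"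
  using lin_facts(1)[of i] unfolding Vector_Spaces.linear_iff by blast
lemma X_lin: "1 \<le> j \<Longrightarrow> j \<le> l \<Longrightarrow> X j (x + y) = X j x + X j y \<and> X j (scale c x) = scale c (X j x)"
  using lin_facts(2)[of j] unfolding Vector_Spaces.linear_iff by blast
lemma Xinv_lin: "1 \<le> j \<Longrightarrow> j \<le> l \<Longrightarrow> Xinv j (x + y) = Xinv j x + Xinv j y \<and> Xinv j (scale c x) = scale c (Xinv j x)"
  using lin_facts(2)[of j] unfolding Vector_Spaces.linear_iff by blast

lemma T_TinvT: "1 \<le> i \<Longrightarrow> i < l \<Longrightarrow> Tinv i (T i w) = w"
  using D unfolding daha_right_module_def by blast
lemma T_quad0: "1 \<le> i \<Longrightarrow> i < l \<Longrightarrow> T i (T i w + w) - scale (q^2) (T i w + w) = 0"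
  using D unfolding daha_right_module_def by blast
lemma XXinv: "1 \<le> j \<Longrightarrow> j \<le> l \<Longrightarrow> Xinv j (X j w) = w \<and> X j (Xinv j w) = w"
  using D unfolding daha_right_module_def by blast
lemma Xcomm: "1 \<le> j \<Longrightarrow> j \<le> l \<Longrightarrow> 1 \<le> k \<Longrightarrow> k \<le> l \<Longrightarrow>
   X j (X k w) = X k (X j w) \<and> X j (Xinv k w) = Xinv k (X j w) \<and> Xinv j (Xinv k w) = Xinv k (Xinv j w)"
  using D unfolding daha_right_module_def by blast
lemma TXT: "1 \<le> i \<Longrightarrow> i < l \<Longrightarrow> T i (X i (T i w)) = scale (q^2) (X (i+1) w)"
  using D unfolding daha_right_module_def by simp
lemma TXcomm: "1 \<le> i \<Longrightarrow> i < l \<Longrightarrow> 1 \<le> j \<Longrightarrow> j \<le> l \<Longrightarrow> j \<noteq> i \<Longrightarrow> j \<noteq> i + 1 \<Longrightarrow>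
   T i (X j w) = X j (T i w)"
  using D unfolding daha_right_module_def by blast

lemma TXinvcomm: "1 \<le> i \<Longrightarrow> i < l \<Longrightarrow> 1 \<le> j \<Longrightarrow> j \<le> l \<Longrightarrow> j \<noteq> i \<Longrightarrow> j \<noteq> i + 1 \<Longrightarrow>
   T i (Xinv j w) = Xinv j (T i w)"
  by (metis TXcomm XXinv)

lemma T_quad: "1 \<le> i \<Longrightarrow> i < l \<Longrightarrow> T i (T i w) = scale (q^2 - 1) (T i w) + scale (q^2) w"
  using T_quad0[of i w] T_lin[of i]
  by (simp add: V.scale_right_distrib V.scale_left_diff_distrib algebra_simps)

lemma I1: assumes "1 \<le> i" "i < l"
  shows "T i (Xinv (i+1) (T i z)) = scale (q^2) (Xinv i z)"
proof -
  let ?y = "Xinv (i+1) (T i z)"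
  have "T i (X i (T i ?y)) = scale (q^2) (T i z)"
    using TXT[OF assms, of ?y] XXinv[of "i+1"] assms by simp
  hence "Tinv i (T i (X i (T i ?y))) = Tinv i (scale (q^2) (T i z))" by simp
  hence "X i (T i ?y) = scale (q^2) z" using T_TinvT Tinv_lin assms by simp
  hence "Xinv i (X i (T i ?y)) = Xinv i (scale (q^2) z)" by simp
  thus ?thesis using XXinv Xinv_lin assms by simp
qed

lemma I1': assumes "1 \<le> i" "i < l"
  shows "Xinv i z = scale (inverse (q^2)) (T i (Xinv (i+1) (T i z)))"
  using I1[OF assms] q0 by simp

lemma XXT: assumes "1 \<le> i" "i < l"
  shows "X (i+1) (X i (T i y)) = T i (X (i+1) (X i y))"
proof -
  have e: "X (i+1) v = scale (inverse (q^2)) (T i (X i (T i v)))" for v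
    using TXT[OF assms, of v] q0 by simp
  have "X (i+1) (X i (T i y)) = scale (inverse (q^2)) (T i (X i (T i (X i (T i y)))))"
    by (rule e)
  also have "\<dots> = scale (inverse (q^2)) (T i (X i (scale (q^2) (X (i+1) y))))"
    using TXT[OF assms] by simp
  also have "\<dots> = T i (X i (X (i+1) y))"
    using X_lin T_lin assms q0 by simp
  also have "\<dots> = T i (X (i+1) (X i y))" using Xcomm assms by simp
  finally show ?thesis .
qed

lemma XinvT: assumes "1 \<le> i" "i < l"
  shows "T i (Xinv (i+1) (Xinv i z)) = Xinv (i+1) (Xinv i (T i z))"
proof -
  let ?y = "Xinv i (Xinv (i+1) z)"
  have "X (i+1) (X i (T i ?y)) = T i (X (i+1) (X i ?y))" by (rule XXT[OF assms])
  also have "X i ?y = Xinv (i+1) z" using XXinv assms by simp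
  hence "T i (X (i+1) (X i ?y)) = T i z" using XXinv[of "i+1"] assms by simp
  finally have e: "X (i+1) (X i (T i ?y)) = T i z" .
  have "Xinv i (Xinv (i+1) (X (i+1) (X i (T i ?y)))) = T i ?y" using XXinv[of "i+1"] XXinv[of i] assms by simp
  hence "T i ?y = Xinv i (Xinv (i+1) (T i z))" using e by simp
  moreover have "?y = Xinv (i+1) (Xinv i z)" using Xcomm[of i "i+1"] assms by simp
  moreover have "Xinv i (Xinv (i+1) (T i z)) = Xinv (i+1) (Xinv i (T i z))" using Xcomm[of i "i+1"] assms by simp
  ultimately show ?thesis by simp
qed


definition g :: "nat list \<Rightarrow> nat \<Rightarrow> 'm \<Rightarrow> 'm" where
  "g J k = (if J ! (k-1) = \<kappa> then Xinv k else id)"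

definition Rest :: "nat list \<Rightarrow> nat \<Rightarrow> 'm \<Rightarrow> 'm" where
  "Rest J i = act_seq (map (g J) ([1..<i] @ [i+2..<l+1]))"

lemma g_lin: "1 \<le> k \<Longrightarrow> k \<le> l \<Longrightarrow> g J k (x + y) = g J k x + g J k y \<and> g J k (scale c x) = scale c (g J k x)"
  using Xinv_lin[of k] by (simp add: g_def)

lemma g_comm: "1 \<le> k \<Longrightarrow> k \<le> l \<Longrightarrow> 1 \<le> k' \<Longrightarrow> k' \<le> l \<Longrightarrow> g J k (g J' k' x) = g J' k' (g J k x)"
  using Xcomm[of k k'] by (simp add: g_def)

lemma g_T: "1 \<le> i \<Longrightarrow> i < l \<Longrightarrow> 1 \<le> k \<Longrightarrow> k \<le> l \<Longrightarrow> k \<noteq> i \<Longrightarrow> k \<noteq> i+1 \<Longrightarrow> g J k (T i x) = T i (g J k x)"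
  using TXinvcomm[of i k] by (simp add: g_def)

lemma Xneg_g: "Xneg \<kappa> l Xinv J x = act_seq (map (g J) [1..<l+1]) x"
proof -
  have "g J = (\<lambda>k. if J ! (k-1) = \<kappa> then Xinv k else id)" by (rule ext) (simp add: g_def)
  thus ?thesis by (simp only: Xneg_def)
qed

lemma Xneg_split: assumes "1 \<le> i" "i < l"
  shows "Xneg \<kappa> l Xinv J x = Rest J i (g J (i+1) (g J i x))"
proof -
  have u: "[1..<l+1] = [1..<i] @ i # (i+1) # [i+2..<l+1]"
  proof -
    have "[1..<l+1] = [1..<i] @ [i..<l+1]" using assms upt_add_eq_append[of 1 i "l+1-i"] by simp
    also have "[i..<l+1] = i # (i+1) # [i+2..<l+1]" using assms by (simp add: upt_conv_Cons)
    finally show ?thesis .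
  qed
  have c1: "\<forall>h\<in>set (map (g J) [1..<i]). \<forall>x. g J i (h x) = h (g J i x)"
    using assms g_comm by auto
  have c2: "\<forall>h\<in>set (map (g J) [1..<i]). \<forall>x. g J (i+1) (h x) = h (g J (i+1) x)"
    using assms g_comm by auto
  have "Xneg \<kappa> l Xinv J x = act_seq (map (g J) [1..<i] @ g J i # g J (i+1) # map (g J) [i+2..<l+1]) x"
    by (simp only: Xneg_g u map_append list.map)
  also have "\<dots> = act_seq (map (g J) [1..<i] @ g J (i+1) # map (g J) [i+2..<l+1]) (g J i x)"
    by (rule act_seq_move[OF c1])
  also have "\<dots> = act_seq (map (g J) [1..<i] @ map (g J) [i+2..<l+1]) (g J (i+1) (g J i x))"
    by (rule act_seq_move[OF c2])
  finally show ?thesis by (simp only: Rest_def map_append)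
qed

lemma Rest_add: "i < l \<Longrightarrow> Rest J i (x + y) = Rest J i x + Rest J i y"
  unfolding Rest_def by (rule act_seq_add) (auto simp: g_lin)

lemma Rest_scale: "i < l \<Longrightarrow> Rest J i (scale c x) = scale c (Rest J i x)"
  unfolding Rest_def by (rule act_seq_comm) (auto simp: g_lin)

lemma Rest_T: "1 \<le> i \<Longrightarrow> i < l \<Longrightarrow> Rest J i (T i x) = T i (Rest J i x)"
  unfolding Rest_def by (rule act_seq_comm) (auto simp: g_T)

lemma Rest_swap: "1 \<le> i \<Longrightarrow> Rest (swap_at J i) i = Rest J i"
  unfolding Rest_def g_def by (rule arg_cong[where f=act_seq]) (auto simp: swap_nth3)

lemma Xneg_add: "Xneg \<kappa> l Xinv J (x + y) = Xneg \<kappa> l Xinv J x + Xneg \<kappa> l Xinv J y"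
  unfolding Xneg_g by (rule act_seq_add) (auto simp: g_lin)

lemma Xneg_scale: "Xneg \<kappa> l Xinv J (scale c x) = scale c (Xneg \<kappa> l Xinv J x)"
  unfolding Xneg_g by (rule act_seq_comm) (auto simp: g_lin)

lemma Xneg_zero: "Xneg \<kappa> l Xinv J 0 = 0"
  using Xneg_scale[of J 0 0] by simp

sublocale FM: module "fscale scale"
  by unfold_locales (auto simp: fscale_def fun_eq_iff V.scale_right_distrib V.scale_left_distrib)

lemma sing_add: "sing K (x + y) = sing K x + sing K (y::'m)"
  by (simp add: sing_def fun_eq_iff)
lemma sing_zero: "sing K 0 = 0"
  by (auto simp: sing_def fun_eq_iff)
lemma sing_scale: "sing K (scale c x) = fscale scale c (sing K x)"
  by (auto simp: sing_def fscale_def)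

lemma Psi_sing: assumes "J \<in> idx \<kappa> l"
  shows "Psi \<kappa> l Xinv (sing J x) = sing (shift \<kappa> J) (Xneg \<kappa> l Xinv J x)"
proof -
  have "Psi \<kappa> l Xinv (sing J x) = (\<Sum>K\<in>idx \<kappa> l. if K = J then sing (shift \<kappa> J) (Xneg \<kappa> l Xinv J x) else 0)"
    unfolding Psi_def by (rule sum.cong) (auto simp: sing_def[of J] Xneg_zero sing_zero)
  thus ?thesis using assms finite_idx by simp
qed

lemma Psi_add: "Psi \<kappa> l Xinv (F + G) = Psi \<kappa> l Xinv F + Psi \<kappa> l Xinv G"
  unfolding Psi_def by (simp add: Xneg_add sing_add sum.distrib)

lemma Psi_scale: "Psi \<kappa> l Xinv (fscale scale c F) = fscale scale c (Psi \<kappa> l Xinv F)"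
  unfolding Psi_def by (simp add: FM.scale_sum_right fscale_def[of scale c F] Xneg_scale sing_scale)

lemma Psi_diff: "Psi \<kappa> l Xinv (F - G) = Psi \<kappa> l Xinv F - Psi \<kappa> l Xinv G"
  using Psi_add[of "F - G" G] by (simp add: algebra_simps)

lemma Psi_zero: "Psi \<kappa> l Xinv 0 = 0"
  using Psi_diff[of 0 0] by simp

lemma Tact_sing: assumes "K \<in> idx \<kappa> l"
  shows "Tact scale \<kappa> l q t i (sing K y) = (\<lambda>K'. scale (hc q t i K' K) y)"
proof
  fix K'
  have "Tact scale \<kappa> l q t i (sing K y) K' = (\<Sum>J\<in>idx \<kappa> l. if J = K then scale (hc q t i K' K) y else 0)"
    unfolding Tact_def by (rule sum.cong) (auto simp: sing_def)
  thus "Tact scale \<kappa> l q t i (sing K y) K' = scale (hc q t i K' K) y" using assms finite_idx by simp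
qed


lemma Tact_eq: assumes "K \<in> idx \<kappa> l" "K ! (i-1) = K ! i"
  shows "Tact scale \<kappa> l q t i (sing K y) = fscale scale (of_int (t (K!i)) * q powi (1 + t (K!i))) (sing K y)"
  unfolding Tact_sing[OF assms(1)] using assms(2)
  by (auto simp: fun_eq_iff hc_def Let_def fscale_def sing_def)

lemma Tact_lt: assumes "K \<in> idx \<kappa> l" "K ! (i-1) < K ! i" "1 \<le> i" "i < l"
  shows "Tact scale \<kappa> l q t i (sing K y) =
    fscale scale ((-1::complex) ^ nat (par t (K!(i-1)) * par t (K!i)) * q) (sing (swap_at K i) y)"
  unfolding Tact_sing[OF assms(1)] using assms
  by (auto simp: fun_eq_iff hc_def Let_def fscale_def sing_def)

lemma Tact_gt: assumes "K \<in> idx \<kappa> l" "K ! (i-1) > K ! i" "1 \<le> i" "i < l"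
  shows "Tact scale \<kappa> l q t i (sing K y) =
    fscale scale ((-1::complex) ^ nat (par t (K!(i-1)) * par t (K!i)) * q) (sing (swap_at K i) y)
    + fscale scale (q^2 - 1) (sing K y)"
proof -
  have l: "length K = l" using assms(1) by (simp add: idx_def)
  have ne: "swap_at K i \<noteq> K" using swap_neq[of i K] assms l by simp
  show ?thesis
    unfolding Tact_sing[OF assms(1)] using assms ne
    by (auto simp: fun_eq_iff hc_def Let_def fscale_def sing_def)
qed

abbreviation Kt where "Kt \<equiv> tensor_kernel scale \<kappa> l q (tau \<kappa> s) T"

lemma Kt_span: "Kt = FM.span (rels scale \<kappa> l q (tau \<kappa> s) T)"
  by (simp add: tensor_kernel_def)

definition eqv (infix "\<approx>" 50) where "A \<approx> B \<longleftrightarrow> A - B \<in> Kt"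

lemma eqv_refl: "A = B \<Longrightarrow> A \<approx> B"
  by (simp add: eqv_def Kt_span FM.span_zero)
lemma eqv_trans: "A \<approx> B \<Longrightarrow> B \<approx> C \<Longrightarrow> A \<approx> C"
  unfolding eqv_def Kt_span using FM.span_add by fastforce
lemma eqv_add: "A \<approx> B \<Longrightarrow> C \<approx> D \<Longrightarrow> A + C \<approx> B + D"
  unfolding eqv_def Kt_span using FM.span_add by (fastforce simp: algebra_simps)
lemma eqv_scale: "A \<approx> B \<Longrightarrow> fscale scale c A \<approx> fscale scale c B"
  unfolding eqv_def Kt_span using FM.span_scale by (fastforce simp: FM.scale_right_diff_distrib)
lemma eqv_sym: "A \<approx> B \<Longrightarrow> B \<approx> A"
  unfolding eqv_def Kt_span using FM.span_neg by fastforce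

lemmas [trans] = eqv_trans

lemma I2: assumes "1 \<le> i" "i < l"
  shows "Xinv i (T i w) = scale (inverse (q^2) * (q^2 - 1)) (T i (Xinv (i+1) (T i w))) + T i (Xinv (i+1) w)"
proof -
  have "Xinv i (T i w) = scale (inverse (q^2)) (T i (Xinv (i+1) (T i (T i w))))" by (rule I1'[OF assms])
  also have "T i (T i w) = scale (q^2 - 1) (T i w) + scale (q^2) w" by (rule T_quad[OF assms])
  finally show ?thesis using assms q0 Xinv_lin[of "i+1"] T_lin[of i]
    by (simp add: V.scale_right_distrib)
qed

lemma eqv_base: "K \<in> idx \<kappa> l \<Longrightarrow> 1 \<le> i \<Longrightarrow> i < l \<Longrightarrow>
   sing K (T i y) \<approx> Tact scale \<kappa> l q (tau \<kappa> s) i (sing K y)"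
  unfolding eqv_def Kt_span by (rule FM.span_base) (auto simp: rels_def)


lemma main_gen:
  assumes J: "J \<in> idx \<kappa> l" and i: "1 \<le> i" "i < l"
  shows "Psi \<kappa> l Xinv (sing J (T i w)) \<approx> Psi \<kappa> l Xinv (Tact scale \<kappa> l q s i (sing J w))"
proof -
  have len: "length J = l" using J by (simp add: idx_def)
  define a where "a = J ! (i-1)"
  define b where "b = J ! i"
  have setJ: "set J \<subseteq> {1..\<kappa>}" using J by (simp add: idx_def)
  have a1: "a \<in> {1..\<kappa>}" using subsetD[OF setJ nth_mem[of "i-1" J]] len i unfolding a_def by simp
  have b1: "b \<in> {1..\<kappa>}" using subsetD[OF setJ nth_mem[of i J]] len i unfolding b_def by simp
  define sw where "sw = swap_at J i"
  define P where "P = shift \<kappa> J"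
  define Q where "Q = swap_at P i"
  have swI: "sw \<in> idx \<kappa> l" using swap_idx J i by (simp add: sw_def)
  have PI: "P \<in> idx \<kappa> l" using shift_idx J by (simp add: P_def)
  have lenP: "length P = l" using PI by (simp add: idx_def)
  have QI: "Q \<in> idx \<kappa> l" using swap_idx PI i by (simp add: Q_def)
  have Qsh: "shift \<kappa> sw = Q" using shift_swap[of i J] i len by (simp add: sw_def Q_def P_def)
  have sw1: "sw ! (i-1) = b" "sw ! i = a"
    using swap_nth1[of i J] swap_nth2[of i J] i len by (simp_all add: sw_def a_def b_def)
  have P1: "P ! (i-1) = (if a = \<kappa> then 1 else a + 1)" "P ! i = (if b = \<kappa> then 1 else b + 1)"
    using shift_nth[of "i-1" J \<kappa>] shift_nth[of i J \<kappa>] i len by (auto simp: P_def a_def b_def)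
  have Q1: "Q ! (i-1) = (if b = \<kappa> then 1 else b + 1)" "Q ! i = (if a = \<kappa> then 1 else a + 1)"
    using P1 swap_nth1[of i P] swap_nth2[of i P] i lenP by (auto simp: Q_def)
  have ta: "tau \<kappa> s (if a = \<kappa> then 1 else a + 1) = s a" using tau_sh a1 by blast
  have tb: "tau \<kappa> s (if b = \<kappa> then 1 else b + 1) = s b" using tau_sh b1 by blast
  have pa: "par (tau \<kappa> s) (if a = \<kappa> then 1 else a + 1) = par s a" using ta by (simp add: par_def)
  have pb: "par (tau \<kappa> s) (if b = \<kappa> then 1 else b + 1) = par s b" using tb by (simp add: par_def)
  define R where "R = Rest J i"
  have Rsw: "Rest sw i = R" using Rest_swap i by (simp add: sw_def R_def)
  have XJ: "Xneg \<kappa> l Xinv J x = R (g J (i+1) (g J i x))" for x using Xneg_split i by (simp add: R_def)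
  have Xsw: "Xneg \<kappa> l Xinv sw x = R (g sw (i+1) (g sw i x))" for x using Xneg_split[of i sw] i Rsw by simp
  have gJ: "g J i = (if a = \<kappa> then Xinv i else id)" "g J (i+1) = (if b = \<kappa> then Xinv (i+1) else id)"
    by (simp_all add: fun_eq_iff g_def a_def b_def)
  have gsw: "g sw i = (if b = \<kappa> then Xinv i else id)" "g sw (i+1) = (if a = \<kappa> then Xinv (i+1) else id)"
    using sw1 by (simp_all add: fun_eq_iff g_def)
  have gJs: "g J (Suc i) = (if b = \<kappa> then Xinv (Suc i) else id)" using gJ(2) by simp
  have gsws: "g sw (Suc i) = (if a = \<kappa> then Xinv (Suc i) else id)" using gsw(2) by simp
  define sg where "sg = (-1::complex) ^ nat (par s a * par s b)"
  have sgc: "(-1::complex) ^ nat (par s b * par s a) = sg" by (simp add: sg_def mult.commute)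
  have LHS: "Psi \<kappa> l Xinv (sing J (T i w)) = sing P (R (g J (i+1) (g J i (T i w))))"
    using Psi_sing[OF J] XJ by (simp add: P_def)
  have Rl: "R (x + y) = R x + R y" "R (scale c x) = scale c (R x)" "R (T i x) = T i (R x)" for x y c
    using Rest_add[of i J x y] Rest_scale[of i J c x] Rest_T[of i J x] i by (simp_all add: R_def)
  have Rl2: "R (x + y) = R x + R y" "R (scale c x) = scale c (R x)" for x y c using Rl by auto
  have PJ: "Psi \<kappa> l Xinv (sing J x) = sing P (R (g J (i+1) (g J i x)))" for x
    using Psi_sing[OF J] XJ by (simp add: P_def)
  have Psw: "Psi \<kappa> l Xinv (sing sw x) = sing Q (R (g sw (i+1) (g sw i x)))" for x
    using Psi_sing[OF swI] Xsw Qsh by simp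
  have sg2: "sg * sg = 1" by (simp add: sg_def power_mult_distrib[symmetric] flip: power_add)
  show ?thesis
  proof (cases "a = b")
    case True
    have hT: "g J (i+1) (g J i (T i x)) = T i (g J (i+1) (g J i x))" for x
      using XinvT[OF i, of x] True gJ by (cases "a = \<kappa>") simp_all
    define e where "e = of_int (s a) * q powi (1 + s a)"
    have Jeq: "J ! (i-1) = J ! i" using True by (simp add: a_def b_def)
    have TJ: "Tact scale \<kappa> l q s i (sing J w) = fscale scale e (sing J w)"
      using Tact_eq[OF J Jeq, of s w] True by (simp add: b_def e_def)
    have Peq: "P ! (i-1) = P ! i" using P1 True by simp
    have tP: "tau \<kappa> s (P ! i) = s a" using P1(2) tb True by simp
    have TP: "Tact scale \<kappa> l q (tau \<kappa> s) i (sing P y) = fscale scale e (sing P y)" for y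
      using Tact_eq[OF PI Peq, of "tau \<kappa> s" y] tP by (simp add: e_def)
    let ?y = "R (g J (i+1) (g J i w))"
    have "Psi \<kappa> l Xinv (sing J (T i w)) \<approx> sing P (T i ?y)" using LHS hT Rl by (intro eqv_refl) simp
    also have "\<dots> \<approx> Tact scale \<kappa> l q (tau \<kappa> s) i (sing P ?y)" by (rule eqv_base[OF PI i])
    also have "\<dots> \<approx> fscale scale e (sing P ?y)" by (rule eqv_refl) (rule TP)
    also have "\<dots> \<approx> Psi \<kappa> l Xinv (Tact scale \<kappa> l q s i (sing J w))" by (rule eqv_refl) (simp only: TJ Psi_scale PJ)
    finally show ?thesis .
  next
    case False
    define c where "c = sg * q"
    have QP: "swap_at Q i = P" using swap_swap[of i P] i lenP by (simp add: Q_def)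
    have cc: "c * inverse (q^2) * c = 1" using sg2 q0 by (simp add: c_def power2_eq_square field_simps)
    consider (lt) "a < b" | (gt) "b < a" using False by linarith
    then show ?thesis
    proof cases
      case lt
      have Jlt: "J!(i-1) < J!i" using lt by (simp add: a_def b_def)
      have TJ: "Tact scale \<kappa> l q s i (sing J w) = fscale scale c (sing sw w)"
        using Tact_lt[OF J Jlt i, of s w] by (simp add: c_def sg_def a_def b_def sw_def)
      have RHS: "Psi \<kappa> l Xinv (Tact scale \<kappa> l q s i (sing J w)) \<approx> fscale scale c (sing Q (R (g sw (i+1) (g sw i w))))"
        by (rule eqv_refl) (simp only: TJ Psi_scale Psw)
      have na: "a \<noteq> \<kappa>" using lt b1 by auto
      show ?thesis
      proof (cases "b = \<kappa>")
        case False
        have P1': "P!(i-1) = a+1" "P!i = b+1" using P1 na False by simp_all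
        have pa': "par (tau \<kappa> s) (a+1) = par s a" "par (tau \<kappa> s) (b+1) = par s b" using pa pb na False by simp_all
        have Plt: "P!(i-1) < P!i" using P1' lt by simp
        have TP: "Tact scale \<kappa> l q (tau \<kappa> s) i (sing P y) = fscale scale c (sing Q y)" for y
          using Tact_lt[OF PI Plt i, of "tau \<kappa> s" y] P1' pa' by (simp add: c_def sg_def Q_def)
        have "Psi \<kappa> l Xinv (sing J (T i w)) \<approx> sing P (T i (R w))"
          by (rule eqv_refl) (simp add: LHS gJ gJs na False Rl)
        also have "\<dots> \<approx> Tact scale \<kappa> l q (tau \<kappa> s) i (sing P (R w))" by (rule eqv_base[OF PI i])
        also have "\<dots> \<approx> fscale scale c (sing Q (R (g sw (i+1) (g sw i w))))"
          by (rule eqv_refl) (simp add: TP gsw gsws na False)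
        also have "\<dots> \<approx> Psi \<kappa> l Xinv (Tact scale \<kappa> l q s i (sing J w))" by (rule eqv_sym[OF RHS])
        finally show ?thesis .
      next
        case True
        have Q1': "Q!(i-1) = 1" "Q!i = a+1" using Q1 na True by simp_all
        have pa': "par (tau \<kappa> s) (a+1) = par s a" "par (tau \<kappa> s) 1 = par s b" using pa pb na True by simp_all
        have Qlt: "Q!(i-1) < Q!i" using Q1' a1 by simp
        have TQ: "Tact scale \<kappa> l q (tau \<kappa> s) i (sing Q y) = fscale scale c (sing P y)" for y
          using Tact_lt[OF QI Qlt i, of "tau \<kappa> s" y] sgc Q1' pa' by (simp add: c_def QP)
        define y1 where "y1 = R (Xinv (i+1) (T i w))"
        have RX: "R (Xinv i w) = scale (inverse (q^2)) (T i y1)"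
          using I1'[OF i, of w] by (simp add: Rl y1_def)
        have "Psi \<kappa> l Xinv (Tact scale \<kappa> l q s i (sing J w)) \<approx> fscale scale c (sing Q (R (Xinv i w)))"
          using RHS by (simp add: gsw gsws na True)
        also have "\<dots> \<approx> fscale scale (c * inverse (q^2)) (sing Q (T i y1))"
          by (rule eqv_refl) (simp add: RX sing_scale)
        also have "\<dots> \<approx> fscale scale (c * inverse (q^2)) (Tact scale \<kappa> l q (tau \<kappa> s) i (sing Q y1))"
          by (rule eqv_scale[OF eqv_base[OF QI i]])
        also have "\<dots> \<approx> sing P y1"
          by (rule eqv_refl) (simp add: TQ cc)
        also have "\<dots> \<approx> Psi \<kappa> l Xinv (sing J (T i w))"
          by (rule eqv_refl) (simp add: LHS gJ gJs na True y1_def)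
        finally show ?thesis by (rule eqv_sym)
      qed
    next
      case gt
      have Jgt: "J!(i-1) > J!i" using gt by (simp add: a_def b_def)
      have TJ: "Tact scale \<kappa> l q s i (sing J w) = fscale scale c (sing sw w) + fscale scale (q^2 - 1) (sing J w)"
        using Tact_gt[OF J Jgt i, of s w] by (simp add: c_def sg_def a_def b_def sw_def)
      have RHS: "Psi \<kappa> l Xinv (Tact scale \<kappa> l q s i (sing J w)) \<approx>
          fscale scale c (sing Q (R (g sw (i+1) (g sw i w)))) + fscale scale (q^2 - 1) (sing P (R (g J (i+1) (g J i w))))"
        by (rule eqv_refl) (simp only: TJ Psi_add Psi_scale Psw PJ)
      have nb: "b \<noteq> \<kappa>" using gt a1 by auto
      show ?thesis
      proof (cases "a = \<kappa>")
        case False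
        have P1': "P!(i-1) = a+1" "P!i = b+1" using P1 nb False by simp_all
        have pa': "par (tau \<kappa> s) (a+1) = par s a" "par (tau \<kappa> s) (b+1) = par s b" using pa pb nb False by simp_all
        have Pgt: "P!(i-1) > P!i" using P1' gt by simp
        have TP: "Tact scale \<kappa> l q (tau \<kappa> s) i (sing P y) = fscale scale c (sing Q y) + fscale scale (q^2 - 1) (sing P y)" for y
          using Tact_gt[OF PI Pgt i, of "tau \<kappa> s" y] P1' pa' by (simp add: c_def sg_def Q_def)
        have "Psi \<kappa> l Xinv (sing J (T i w)) \<approx> sing P (T i (R w))"
          by (rule eqv_refl) (simp add: LHS gJ gJs nb False Rl)
        also have "\<dots> \<approx> Tact scale \<kappa> l q (tau \<kappa> s) i (sing P (R w))" by (rule eqv_base[OF PI i])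
        also have "\<dots> \<approx> fscale scale c (sing Q (R (g sw (i+1) (g sw i w)))) + fscale scale (q^2 - 1) (sing P (R (g J (i+1) (g J i w))))"
          by (rule eqv_refl) (simp add: TP gsw gsws gJ gJs nb False)
        also have "\<dots> \<approx> Psi \<kappa> l Xinv (Tact scale \<kappa> l q s i (sing J w))" by (rule eqv_sym[OF RHS])
        finally show ?thesis .
      next
        case True
        have P1': "P!(i-1) = 1" "P!i = b+1" using P1 nb True by simp_all
        have pa': "par (tau \<kappa> s) 1 = par s a" "par (tau \<kappa> s) (b+1) = par s b" using pa pb nb True by simp_all
        have Plt: "P!(i-1) < P!i" using P1' b1 by simp
        have TP: "Tact scale \<kappa> l q (tau \<kappa> s) i (sing P y) = fscale scale c (sing Q y)" for y
          using Tact_lt[OF PI Plt i, of "tau \<kappa> s" y] P1' pa' by (simp add: c_def sg_def Q_def)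
        define y1 where "y1 = R (Xinv (i+1) (T i w))"
        define y2 where "y2 = R (Xinv (i+1) w)"
        define \<alpha> where "\<alpha> = inverse (q^2) * (q^2 - 1)"
        have RX: "R (Xinv i w) = scale (inverse (q^2)) (T i y1)"
          using I1'[OF i, of w] by (simp add: Rl y1_def)
        have RXT: "R (Xinv i (T i w)) = scale \<alpha> (T i y1) + T i y2"
          using I2[OF i, of w] by (simp add: Rl y1_def y2_def \<alpha>_def)
        have "Psi \<kappa> l Xinv (sing J (T i w)) \<approx> fscale scale \<alpha> (sing P (T i y1)) + sing P (T i y2)"
          by (rule eqv_refl) (simp add: LHS gJ gJs nb True RXT sing_add sing_scale)
        also have "\<dots> \<approx> fscale scale \<alpha> (Tact scale \<kappa> l q (tau \<kappa> s) i (sing P y1)) + Tact scale \<kappa> l q (tau \<kappa> s) i (sing P y2)"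
          by (rule eqv_add[OF eqv_scale[OF eqv_base[OF PI i]] eqv_base[OF PI i]])
        also have "\<dots> \<approx> fscale scale c (sing Q y2) + fscale scale ((q^2 - 1) * inverse (q^2)) (fscale scale c (sing Q y1))"
          by (rule eqv_refl) (simp add: TP \<alpha>_def algebra_simps)
        finally have L: "Psi \<kappa> l Xinv (sing J (T i w)) \<approx> fscale scale c (sing Q y2) + fscale scale ((q^2 - 1) * inverse (q^2)) (fscale scale c (sing Q y1))" .
        have "Psi \<kappa> l Xinv (Tact scale \<kappa> l q s i (sing J w)) \<approx> fscale scale c (sing Q y2) + fscale scale ((q^2 - 1) * inverse (q^2)) (sing P (T i y1))"
          using RHS by (simp add: gsw gsws gJ gJs nb True RX sing_scale y2_def)
        also have "\<dots> \<approx> fscale scale c (sing Q y2) + fscale scale ((q^2 - 1) * inverse (q^2)) (Tact scale \<kappa> l q (tau \<kappa> s) i (sing P y1))"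
          by (rule eqv_add[OF eqv_refl[OF refl] eqv_scale[OF eqv_base[OF PI i]]])
        also have "\<dots> \<approx> fscale scale c (sing Q y2) + fscale scale ((q^2 - 1) * inverse (q^2)) (fscale scale c (sing Q y1))"
          by (rule eqv_refl) (simp only: TP)
        finally have R': "Psi \<kappa> l Xinv (Tact scale \<kappa> l q s i (sing J w)) \<approx> fscale scale c (sing Q y2) + fscale scale ((q^2 - 1) * inverse (q^2)) (fscale scale c (sing Q y1))" .
        show ?thesis by (rule eqv_trans[OF L eqv_sym[OF R']])
      qed
    qed
  qed
qed


lemma main:
  assumes "F \<in> tensor_kernel scale \<kappa> l q s T"
  shows "Psi \<kappa> l Xinv F \<in> Kt"
proof -
  have "F \<in> FM.span (rels scale \<kappa> l q s T)" using assms by (simp add: tensor_kernel_def)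
  then show ?thesis
  proof (induction rule: FM.span_induct_alt)
    case base
    show ?case unfolding Psi_zero Kt_span by (rule FM.span_zero)
  next
    case (step c x y)
    obtain J w i where x: "x = sing J (T i w) - Tact scale \<kappa> l q s i (sing J w)"
      and J: "J \<in> idx \<kappa> l" and i: "1 \<le> i" "i < l"
      using step.hyps(1) by (auto simp: rels_def)
    have "Psi \<kappa> l Xinv x \<in> Kt"
      using main_gen[OF J i, of w] by (simp add: x Psi_diff eqv_def)
    hence "fscale scale c (Psi \<kappa> l Xinv x) + Psi \<kappa> l Xinv y \<in> Kt"
      using step.IH by (simp add: Kt_span FM.span_add FM.span_scale)
    thus ?case by (simp only: Psi_add Psi_scale)
  qed
qed

end

theorem lemma4p2:
  fixes scale :: "complex \<Rightarrow> 'm::ab_group_add \<Rightarrow> 'm"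
    and m n \<kappa> l :: nat and q \<zeta> :: complex and s :: "nat \<Rightarrow> int"
    and T Tinv X Xinv Y Yinv :: "nat \<Rightarrow> 'm \<Rightarrow> 'm"
  assumes "m \<noteq> n" and "\<kappa> = m + n"
    and "q \<noteq> 0" and "\<forall>k::nat. k > 0 \<longrightarrow> q ^ k \<noteq> 1"
    and "\<zeta> \<noteq> 0" and "l \<ge> 1"
    and "parity_seq \<kappa> m s"
    and "daha_right_module scale q \<zeta> l T Tinv X Xinv Y Yinv"
  shows "\<forall>F \<in> tensor_kernel scale \<kappa> l q s T.
           Psi \<kappa> l Xinv F \<in> tensor_kernel scale \<kappa> l q (tau \<kappa> s) T"
proof -
  interpret L scale \<kappa> l q \<zeta> s T Tinv X Xinv Y Yinv
    using assms by unfold_locales auto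
  show ?thesis using main by blast
qed

end
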